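(* Let $\mathcal{A}\in\mathbb{R}^{d_1\times\cdots\times d_k}$ be an order-$k$ real tensor and let $1\le p\le q\le\infty$. Then \[ \|\mathcal{A}\|_p\le \|\mathcal{A}\|_q\le \dim(\mathcal{A})^{\frac1p-\frac1q}\,\|\mathcal{A}\|_p . \]
   Context: For $\mathcal{A}=(a_{i_1\dots i_k})\in\mathbb{R}^{d_1\times\cdots\times d_k}$, $\dim(\mathcal{A})=\prod_{n=1}^k d_n$. The associated multilinear functional is $\mathcal{A}(\mathbf{x}_1,\dots,\mathbf{x}_k)=\sum_{i_1,\dots,i_k} a_{i_1\dots i_k}x^{(1)}_{i_1}\cdots x^{(k)}_{i_k}$ for $\mathbf{x}_n\in\mathbb{R}^{d_n}$. For $1\le p\le\infty$ the $l^p$-norm of $\mathcal{A}$ is defined as $\|\mathcal{A}\|_p=\sup\{\mathcal{A}(\mathbf{x}_1,\dots,\mathbf{x}_k):\ \mathbf{x}_n\in\mathbb{R}^{d_n},\ \|\mathbf{x}_n\|_p=1,\ n\in[k]\}$, where $\|\mathbf{x}_n\|_p$ is the vector $l^p$-norm. (This is used even for matrices, which are viewed as bilinear functionals; it is not the classical induced matrix $l^p$-norm when $p\neq 2$.) *)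

theory Defs
  imports Complex_Main "HOL-Library.Extended_Real" "HOL-Library.FuncSet"
begin

text \<open>An order-k real tensor with dimensions d 0, ..., d (k-1) is a function on
  multi-indices i (i n < d n for n < k); entries outside this index set are irrelevant.
  A vector of R^m is a function nat => real, only indices j < m matter.\<close>

definition multi_indices :: "nat \<Rightarrow> (nat \<Rightarrow> nat) \<Rightarrow> (nat \<Rightarrow> nat) set" where
  "multi_indices k d = PiE {..<k} (\<lambda>n. {..<d n})"

definition tensor_dim :: "nat \<Rightarrow> (nat \<Rightarrow> nat) \<Rightarrow> nat" where
  "tensor_dim k d = (\<Prod>n<k. d n)"

definition vec_lp_norm :: "ereal \<Rightarrow> nat \<Rightarrow> (nat \<Rightarrow> real) \<Rightarrow> real" where
  "vec_lp_norm p m v =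
     (if p = \<infinity> then Max ((\<lambda>j. \<bar>v j\<bar>) ` {..<m})
      else (\<Sum>j<m. \<bar>v j\<bar> powr real_of_ereal p) powr (1 / real_of_ereal p))"

definition multilin :: "nat \<Rightarrow> (nat \<Rightarrow> nat) \<Rightarrow> ((nat \<Rightarrow> nat) \<Rightarrow> real) \<Rightarrow> (nat \<Rightarrow> nat \<Rightarrow> real) \<Rightarrow> real" where
  "multilin k d A x = (\<Sum>i\<in>multi_indices k d. A i * (\<Prod>n<k. x n (i n)))"

definition tensor_lp_norm :: "ereal \<Rightarrow> nat \<Rightarrow> (nat \<Rightarrow> nat) \<Rightarrow> ((nat \<Rightarrow> nat) \<Rightarrow> real) \<Rightarrow> real" where
  "tensor_lp_norm p k d A =
     Sup {multilin k d A x | x. \<forall>n<k. vec_lp_norm p (d n) (x n) = 1}"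

definition exp_inv :: "ereal \<Rightarrow> real" where
  "exp_inv p = (if p = \<infinity> then 0 else 1 / real_of_ereal p)"

end

theory Submission imports Defs "HOL-Analysis.Convex" begin

lemma ereal_ge1_cases:
  assumes "1 \<le> (p::ereal)"
  obtains "p = \<infinity>" | r where "p = ereal r" "1 \<le> r"
  using assms by (cases p) auto

lemma norm_fin: "vec_lp_norm (ereal r) m v = (\<Sum>j<m. \<bar>v j\<bar> powr r) powr (1/r)"
  by (simp add: vec_lp_norm_def)

lemma norm_inf: "vec_lp_norm \<infinity> m v = Max ((\<lambda>j. \<bar>v j\<bar>) ` {..<m})"
  by (simp add: vec_lp_norm_def)

lemma abs_le_norm:
  assumes "1 \<le> p" "j < m"
  shows "\<bar>v j\<bar> \<le> vec_lp_norm p m v"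
  using assms(1)
proof (cases rule: ereal_ge1_cases)
  case 1
  then show ?thesis using assms(2) by (simp add: norm_inf)
next
  case (2 r)
  have "\<bar>v j\<bar> = (\<bar>v j\<bar> powr r) powr (1/r)"
    using 2 by (simp add: powr_powr)
  also have "\<dots> \<le> (\<Sum>j<m. \<bar>v j\<bar> powr r) powr (1/r)"
    apply (rule powr_mono2)
    using 2 assms(2) by (auto intro!: member_le_sum)
  finally show ?thesis using 2 by (simp add: norm_fin)
qed

lemma norm_nonneg:
  assumes "1 \<le> p" "m \<ge> 1"
  shows "0 \<le> vec_lp_norm p m v"
  using abs_le_norm[OF assms(1), of 0 m v] assms(2) by linarith

lemma norm_scale:
  assumes "1 \<le> p" "m \<ge> 1"
  shows "vec_lp_norm p m (\<lambda>j. c * v j) = \<bar>c\<bar> * vec_lp_norm p m v"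
  using assms(1)
proof (cases rule: ereal_ge1_cases)
  case 1
  have mo: "mono (\<lambda>t. \<bar>c\<bar> * t)" by (rule monoI) (simp add: mult_left_mono)
  have ne: "{..<m} \<noteq> {}" using assms(2) lessThan_empty_iff[of m] by simp
  from mono_Max_commute[OF mo, of "(\<lambda>j. \<bar>v j\<bar>) ` {..<m}"] ne
  have "\<bar>c\<bar> * Max ((\<lambda>j. \<bar>v j\<bar>) ` {..<m}) = Max ((\<lambda>j. \<bar>c * v j\<bar>) ` {..<m})"
    by (simp add: image_image abs_mult)
  then show ?thesis using 1 by (simp add: norm_inf)
next
  case (2 r)
  have "(\<Sum>j<m. \<bar>c * v j\<bar> powr r) = \<bar>c\<bar> powr r * (\<Sum>j<m. \<bar>v j\<bar> powr r)"
    by (simp add: abs_mult powr_mult sum_distrib_left)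
  then have "(\<Sum>j<m. \<bar>c * v j\<bar> powr r) powr (1/r) = (\<bar>c\<bar> powr r) powr (1/r) * (\<Sum>j<m. \<bar>v j\<bar> powr r) powr (1/r)"
    by (simp add: powr_mult)
  also have "(\<bar>c\<bar> powr r) powr (1/r) = \<bar>c\<bar>" using 2 by (simp add: powr_powr)
  finally show ?thesis using 2 by (simp add: norm_fin)
qed

lemma norm_zero_vec:
  assumes "1 \<le> p" "m \<ge> 1" "\<forall>j<m. v j = 0"
  shows "vec_lp_norm p m v = 0"
proof -
  have e: "(\<lambda>j. \<bar>v j\<bar>) ` {..<m} = (\<lambda>j. \<bar>0 * v j\<bar>) ` {..<m}"
    using assms(3) by (auto simp: image_def)
  have e2: "(\<Sum>j<m. \<bar>v j\<bar> powr t) = (\<Sum>j<m. \<bar>0 * v j\<bar> powr t)" for t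
    by (rule sum.cong) (use assms(3) in auto)
  have "vec_lp_norm p m v = vec_lp_norm p m (\<lambda>j. 0 * v j)"
    unfolding vec_lp_norm_def e e2 ..
  also have "\<dots> = 0" using norm_scale[OF assms(1,2), of 0 v] by simp
  finally show ?thesis .
qed

lemma norm_mono:
  assumes "1 \<le> p" "p \<le> q" "m \<ge> 1"
  shows "vec_lp_norm q m v \<le> vec_lp_norm p m v"
proof -
  have q1: "1 \<le> q" using assms by auto
  show ?thesis
  proof (cases "q = \<infinity>")
    case True
    have ne: "{..<m} \<noteq> {}" using assms(3) lessThan_empty_iff[of m] by simp
    then show ?thesis using True abs_le_norm[OF assms(1)] by (simp add: norm_inf Max_le_iff)
  next
    case False
    then obtain s where s: "q = ereal s" "1 \<le> s" using q1 by (cases q) auto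
    obtain r where r: "p = ereal r" "1 \<le> r" "r \<le> s" using assms s by (cases p) auto
    show ?thesis
    proof (cases "vec_lp_norm p m v = 0")
      case True
      then have "\<forall>j<m. v j = 0" using abs_le_norm[OF assms(1), of _ m v] by force
      then show ?thesis using True norm_zero_vec[OF q1 assms(3)] by simp
    next
      case False
      define N where "N = vec_lp_norm p m v"
      have N: "N > 0" using False norm_nonneg[OF assms(1,3), of v] N_def by linarith
      define w where "w = (\<lambda>j. (1/N) * v j)"
      have wN: "vec_lp_norm p m w = 1" unfolding w_def norm_scale[OF assms(1,3)] using N N_def by simp
      have wle: "\<bar>w j\<bar> \<le> 1" if "j < m" for j using abs_le_norm[OF assms(1) that, of w] wN by simp
      have S1: "(\<Sum>j<m. \<bar>w j\<bar> powr r) = 1"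
      proof -
        have "(\<Sum>j<m. \<bar>w j\<bar> powr r) powr (1/r) = 1" using wN r by (simp add: norm_fin)
        then have "((\<Sum>j<m. \<bar>w j\<bar> powr r) powr (1/r)) powr r = 1" by simp
        then show ?thesis using r by (simp add: powr_powr sum_nonneg)
      qed
      have "(\<Sum>j<m. \<bar>w j\<bar> powr s) \<le> (\<Sum>j<m. \<bar>w j\<bar> powr r)"
        by (rule sum_mono, rule powr_mono') (use r wle in auto)
      then have "(\<Sum>j<m. \<bar>w j\<bar> powr s) powr (1/s) \<le> 1 powr (1/s)"
        using S1 s by (intro powr_mono2) (auto intro: sum_nonneg)
      then have wq: "vec_lp_norm q m w \<le> 1" using s by (simp add: norm_fin)
      have "v = (\<lambda>j. N * w j)" using N by (simp add: w_def)
      then have "vec_lp_norm q m v = N * vec_lp_norm q m w"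
        using norm_scale[OF q1 assms(3), of N w] N by simp
      also have "\<dots> \<le> N" using wq N by simp
      finally show ?thesis by (simp add: N_def)
    qed
  qed
qed

lemma power_mean_aux:
  fixes w :: "nat \<Rightarrow> real"
  assumes r: "1 \<le> r" "r \<le> s" and S1: "(\<Sum>j<m. \<bar>w j\<bar> powr s) = 1"
  shows "(\<Sum>j<m. \<bar>w j\<bar> powr r) \<le> real m powr (1 - r/s)"
proof -
  define S' where "S' = {j\<in>{..<m}. w j \<noteq> 0}"
  define m' where "m' = real (card S')"
  have fin: "finite S'" by (simp add: S'_def)
  have sub: "S' \<subseteq> {..<m}" by (auto simp: S'_def)
  have sumS: "(\<Sum>j<m. \<bar>w j\<bar> powr t) = (\<Sum>j\<in>S'. \<bar>w j\<bar> powr t)" for t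
    by (rule sum.mono_neutral_right) (auto simp: S'_def)
  have ne: "S' \<noteq> {}"
  proof
    assume "S' = {}"
    then show False using S1 sumS[of s] by simp
  qed
  have m'pos: "m' > 0" using ne fin by (simp add: m'_def card_gt_0_iff)
  have m'le: "m' \<le> real m" unfolding m'_def using card_mono[OF _ sub] by simp
  define T where "T = (\<Sum>j<m. \<bar>w j\<bar> powr r)"
  have T0: "T \<ge> 0" by (simp add: T_def sum_nonneg)
  have conv: "convex_on {0<..} (\<lambda>x::real. x powr (s/r))" using r by (intro powr_convex) simp
  have "(\<lambda>x. x powr (s/r)) (\<Sum>i\<in>S'. (1/m') *\<^sub>R (\<bar>w i\<bar> powr r))
        \<le> (\<Sum>i\<in>S'. (1/m') * (\<lambda>x. x powr (s/r)) (\<bar>w i\<bar> powr r))"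
    by (rule convex_on_sum[OF fin ne conv]) (use m'pos ne in \<open>auto simp: m'_def S'_def\<close>)
  also have "\<dots> = (1/m') * (\<Sum>i\<in>S'. \<bar>w i\<bar> powr s)"
    using r by (simp add: sum_distrib_left powr_powr)
  also have "\<dots> = 1/m'" using S1 sumS[of s] by simp
  finally have J: "(T/m') powr (s/r) \<le> 1/m'"
    by (simp add: T_def sumS[of r] sum_distrib_left[symmetric] divide_inverse mult.commute)
  have "T/m' = ((T/m') powr (s/r)) powr (r/s)"
    using r T0 m'pos by (simp add: powr_powr)
  also have "\<dots> \<le> (1/m') powr (r/s)"
    by (rule powr_mono2) (use r J in auto)
  finally have "T \<le> m' * (1/m') powr (r/s)" using m'pos by (simp add: field_simps)
  also have "\<dots> = m' powr (1 - r/s)"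
    using m'pos by (simp add: powr_diff powr_divide field_simps)
  also have "\<dots> \<le> real m powr (1 - r/s)"
    by (rule powr_mono2) (use r m'pos m'le in auto)
  finally show ?thesis by (simp add: T_def)
qed

lemma norm_rev:
  assumes "1 \<le> p" "p \<le> q" "m \<ge> 1"
  shows "vec_lp_norm p m v \<le> real m powr (exp_inv p - exp_inv q) * vec_lp_norm q m v"
proof -
  have q1: "1 \<le> q" using assms by auto
  have mpos: "real m > 0" using assms(3) by simp
  have ne: "{..<m} \<noteq> {}" using assms(3) lessThan_empty_iff[of m] by simp
  show ?thesis
  proof (cases "q = \<infinity>")
    case qinf: True
    show ?thesis
    proof (cases "p = \<infinity>")
      case True
      then show ?thesis using qinf mpos by (simp add: exp_inv_def)
    next
      case False
      then obtain r where r: "p = ereal r" "1 \<le> r" using assms(1) by (cases p) auto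
      define M where "M = Max ((\<lambda>j. \<bar>v j\<bar>) ` {..<m})"
      have Mge: "\<bar>v j\<bar> \<le> M" if "j < m" for j using that by (simp add: M_def)
      have M0: "M \<ge> 0" using Mge[of 0] assms(3) by linarith
      have "(\<Sum>j<m. \<bar>v j\<bar> powr r) \<le> (\<Sum>j<m. M powr r)"
        by (rule sum_mono, rule powr_mono2) (use r Mge in auto)
      also have "\<dots> = real m * M powr r" by simp
      finally have "(\<Sum>j<m. \<bar>v j\<bar> powr r) powr (1/r) \<le> (real m * M powr r) powr (1/r)"
        by (intro powr_mono2) (use r in \<open>auto intro: sum_nonneg\<close>)
      also have "\<dots> = real m powr (1/r) * M"
        using r M0 by (simp add: powr_mult powr_powr)
      finally show ?thesis using r qinf by (simp add: norm_fin norm_inf exp_inv_def M_def)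
    qed
  next
    case False
    then obtain s where s: "q = ereal s" "1 \<le> s" using q1 by (cases q) auto
    obtain r where r: "p = ereal r" "1 \<le> r" "r \<le> s" using assms s by (cases p) auto
    show ?thesis
    proof (cases "vec_lp_norm q m v = 0")
      case True
      then have "\<forall>j<m. v j = 0" using abs_le_norm[OF q1, of _ m v] by force
      then show ?thesis using True norm_zero_vec[OF assms(1,3)] by simp
    next
      case False
      define N where "N = vec_lp_norm q m v"
      have N: "N > 0" using False norm_nonneg[OF q1 assms(3), of v] N_def by linarith
      define w where "w = (\<lambda>j. (1/N) * v j)"
      have wN: "vec_lp_norm q m w = 1" unfolding w_def norm_scale[OF q1 assms(3)] using N N_def by simp
      have S1: "(\<Sum>j<m. \<bar>w j\<bar> powr s) = 1"
      proof -
        have "(\<Sum>j<m. \<bar>w j\<bar> powr s) powr (1/s) = 1" using wN s by (simp add: norm_fin)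
        then have "((\<Sum>j<m. \<bar>w j\<bar> powr s) powr (1/s)) powr s = 1" by simp
        then show ?thesis using s by (simp add: powr_powr sum_nonneg)
      qed
      have "(\<Sum>j<m. \<bar>w j\<bar> powr r) powr (1/r) \<le> (real m powr (1 - r/s)) powr (1/r)"
        by (rule powr_mono2) (use r power_mean_aux[OF r(2,3) S1] in \<open>auto intro: sum_nonneg\<close>)
      also have "\<dots> = real m powr (1/r - 1/s)"
        using r by (simp add: powr_powr field_simps)
      finally have wp: "vec_lp_norm p m w \<le> real m powr (1/r - 1/s)" using r by (simp add: norm_fin)
      have "v = (\<lambda>j. N * w j)" using N by (simp add: w_def)
      then have "vec_lp_norm p m v = N * vec_lp_norm p m w"
        using norm_scale[OF assms(1,3), of N w] N by simp
      also have "\<dots> \<le> N * real m powr (1/r - 1/s)" using wp N by simp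
      finally show ?thesis using r s by (simp add: N_def exp_inv_def mult.commute)
    qed
  qed
qed

lemma exists_unit:
  assumes "1 \<le> p" "m \<ge> 1"
  shows "\<exists>v. vec_lp_norm p m v = 1"
proof -
  define N where "N = vec_lp_norm p m (\<lambda>j. 1)"
  have "1 \<le> N" using abs_le_norm[OF assms(1), of 0 m "\<lambda>j. 1"] assms(2) by (simp add: N_def)
  then have "vec_lp_norm p m (\<lambda>j. (1/N) * 1) = 1"
    unfolding norm_scale[OF assms] N_def[symmetric] by simp
  then show ?thesis by blast
qed

lemma unit_nonzero:
  assumes "1 \<le> p" "m \<ge> 1" "vec_lp_norm p m v = 1"
  shows "\<exists>j<m. v j \<noteq> 0"
  using norm_zero_vec[OF assms(1,2), of v] assms(3) by auto

lemma unit_other_pos: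
  assumes "1 \<le> p" "1 \<le> q" "m \<ge> 1" "vec_lp_norm p m v = 1"
  shows "vec_lp_norm q m v > 0"
proof -
  obtain j where "j < m" "v j \<noteq> 0" using unit_nonzero[OF assms(1,3,4)] by blast
  then show ?thesis using abs_le_norm[OF assms(2), of j m v] by simp
qed

lemma ml_scale:
  "multilin k d A (\<lambda>n j. t n * x n j) = (\<Prod>n<k. t n) * multilin k d A x"
  unfolding multilin_def by (simp add: prod.distrib sum_distrib_left mult_ac)

definition US :: "ereal \<Rightarrow> nat \<Rightarrow> (nat \<Rightarrow> nat) \<Rightarrow> ((nat \<Rightarrow> nat) \<Rightarrow> real) \<Rightarrow> real set" where
  "US p k d A = {multilin k d A x | x. \<forall>n<k. vec_lp_norm p (d n) (x n) = 1}"

lemma tn_US: "tensor_lp_norm p k d A = Sup (US p k d A)"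
  by (simp add: tensor_lp_norm_def US_def)

lemma US_bdd:
  assumes "1 \<le> p"
  shows "bdd_above (US p k d A)"
proof (rule bdd_aboveI)
  fix z assume "z \<in> US p k d A"
  then obtain x where z: "z = multilin k d A x" and x: "\<forall>n<k. vec_lp_norm p (d n) (x n) = 1"
    by (auto simp: US_def)
  have "A i * (\<Prod>n<k. x n (i n)) \<le> \<bar>A i\<bar>" if i: "i \<in> multi_indices k d" for i
  proof -
    have "\<bar>\<Prod>n<k. x n (i n)\<bar> \<le> 1"
      unfolding abs_prod
    proof (rule prod_le_1)
      fix n assume "n \<in> {..<k}"
      then have "i n < d n" "n < k" using i by (auto simp: multi_indices_def PiE_def)
      then show "0 \<le> \<bar>x n (i n)\<bar> \<and> \<bar>x n (i n)\<bar> \<le> 1"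
        using abs_le_norm[OF assms, of "i n" "d n" "x n"] x by auto
    qed
    then have "\<bar>A i * (\<Prod>n<k. x n (i n))\<bar> \<le> \<bar>A i\<bar>"
      by (simp add: abs_mult mult_left_le)
    then show ?thesis by linarith
  qed
  then show "z \<le> (\<Sum>i\<in>multi_indices k d. \<bar>A i\<bar>)"
    unfolding z multilin_def by (rule sum_mono)
qed

lemma US_ne:
  assumes "1 \<le> p" "\<forall>n<k. d n \<ge> 1"
  shows "US p k d A \<noteq> {}"
proof -
  have "\<forall>n. \<exists>v. n < k \<longrightarrow> vec_lp_norm p (d n) v = 1" using exists_unit[OF assms(1)] assms(2) by blast
  then obtain x where "\<forall>n<k. vec_lp_norm p (d n) (x n) = 1" by metis
  then show ?thesis by (auto simp: US_def)
qed

lemma US_Sup_nonneg: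
  assumes "1 \<le> p" "\<forall>n<k. d n \<ge> 1" "k \<ge> 1"
  shows "Sup (US p k d A) \<ge> 0"
proof -
  obtain z where "z \<in> US p k d A" using US_ne[OF assms(1,2)] by blast
  then obtain x where z: "z = multilin k d A x" and x: "\<forall>n<k. vec_lp_norm p (d n) (x n) = 1"
    by (auto simp: US_def)
  define t where "t = (\<lambda>n::nat. if n = 0 then -1 else (1::real))"
  have "\<forall>n<k. vec_lp_norm p (d n) (\<lambda>j. t n * x n j) = 1"
    using x assms by (simp add: norm_scale t_def)
  then have mem: "multilin k d A (\<lambda>n j. t n * x n j) \<in> US p k d A" by (auto simp: US_def)
  have "(\<Prod>n<k. t n) = t 0 * (\<Prod>n\<in>{..<k} - {0}. t n)"
    using assms(3) by (simp add: prod.remove)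
  also have "(\<Prod>n\<in>{..<k} - {0}. t n) = 1" by (rule prod.neutral) (simp add: t_def)
  finally have "(\<Prod>n<k. t n) = -1" by (simp add: t_def)
  then have "-z \<in> US p k d A" using mem z ml_scale[where t=t and x=x and k=k and d=d and A=A] by simp
  then have "-z \<le> Sup (US p k d A)" "z \<le> Sup (US p k d A)"
    using \<open>z \<in> US p k d A\<close> US_bdd[OF assms(1)] by (auto intro: cSup_upper)
  then show ?thesis by linarith
qed

theorem proposition2p4:
  fixes k :: nat and d :: "nat \<Rightarrow> nat" and A :: "(nat \<Rightarrow> nat) \<Rightarrow> real"
    and p q :: ereal
  assumes "\<forall>n<k. d n \<ge> 1"
    and "1 \<le> p" and "p \<le> q"
  shows "tensor_lp_norm p k d A \<le> tensor_lp_norm q k d A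
       \<and> tensor_lp_norm q k d A
           \<le> real (tensor_dim k d) powr (exp_inv p - exp_inv q) * tensor_lp_norm p k d A"
proof (cases "k = 0")
  case True
  then have "US p k d A = US q k d A" by (simp add: US_def)
  then show ?thesis using True by (simp add: tn_US tensor_dim_def)
next
  case False
  then have k1: "k \<ge> 1" by simp
  have q1: "1 \<le> q" using assms by auto
  define e where "e = exp_inv p - exp_inv q"
  have bp: "bdd_above (US p k d A)" and bq: "bdd_above (US q k d A)"
    using US_bdd assms(2) q1 by auto
  have np: "US p k d A \<noteq> {}" and nq: "US q k d A \<noteq> {}"
    using US_ne assms(1,2) q1 by auto
  have Sp0: "Sup (US p k d A) \<ge> 0" and Sq0: "Sup (US q k d A) \<ge> 0"
    using US_Sup_nonneg assms(1,2) q1 k1 by auto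
  have I: "Sup (US p k d A) \<le> Sup (US q k d A)"
  proof (rule cSup_least[OF np])
    fix z assume "z \<in> US p k d A"
    then obtain x where z: "z = multilin k d A x" and x: "\<forall>n<k. vec_lp_norm p (d n) (x n) = 1"
      by (auto simp: US_def)
    define c where "c = (\<lambda>n. vec_lp_norm q (d n) (x n))"
    have cpos: "c n > 0" if "n < k" for n
      using unit_other_pos[OF assms(2) q1, of "d n" "x n"] x assms(1) that by (simp add: c_def)
    have cle: "c n \<le> 1" if "n < k" for n
      using norm_mono[OF assms(2,3), of "d n" "x n"] x assms(1) that by (simp add: c_def)
    define y where "y = (\<lambda>n j. (1 / c n) * x n j)"
    have "\<forall>n<k. vec_lp_norm q (d n) (y n) = 1"
    proof (intro allI impI)
      fix n assume n: "n < k"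
      have "vec_lp_norm q (d n) (y n) = \<bar>1 / c n\<bar> * c n"
        unfolding y_def using norm_scale[OF q1, of "d n" "1 / c n" "x n"] assms(1) n by (simp add: c_def)
      then show "vec_lp_norm q (d n) (y n) = 1" using cpos[OF n] by simp
    qed
    then have ym: "multilin k d A y \<in> US q k d A" by (auto simp: US_def)
    have yz: "multilin k d A y = (\<Prod>n<k. 1 / c n) * z"
      unfolding y_def z by (rule ml_scale)
    have P1: "(\<Prod>n<k. 1 / c n) \<ge> 1"
      by (rule prod_ge_1) (use cpos cle in auto)
    show "z \<le> Sup (US q k d A)"
    proof (cases "z \<le> 0")
      case True then show ?thesis using Sq0 by linarith
    next
      case False
      then have "z \<le> (\<Prod>n<k. 1 / c n) * z" using P1 by (simp add: mult_le_cancel_right1)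
      also have "\<dots> \<le> Sup (US q k d A)" using ym yz bq by (metis cSup_upper)
      finally show ?thesis .
    qed
  qed
  have II: "Sup (US q k d A) \<le> real (tensor_dim k d) powr e * Sup (US p k d A)"
  proof (rule cSup_least[OF nq])
    fix z assume "z \<in> US q k d A"
    then obtain x where z: "z = multilin k d A x" and x: "\<forall>n<k. vec_lp_norm q (d n) (x n) = 1"
      by (auto simp: US_def)
    define c where "c = (\<lambda>n. vec_lp_norm p (d n) (x n))"
    have cpos: "c n > 0" if "n < k" for n
      using unit_other_pos[OF q1 assms(2), of "d n" "x n"] x assms(1) that by (simp add: c_def)
    have cle: "c n \<le> real (d n) powr e" if "n < k" for n
      using norm_rev[OF assms(2,3), of "d n" "x n"] x assms(1) that by (simp add: c_def e_def)
    define y where "y = (\<lambda>n j. (1 / c n) * x n j)"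
    have "\<forall>n<k. vec_lp_norm p (d n) (y n) = 1"
    proof (intro allI impI)
      fix n assume n: "n < k"
      have "vec_lp_norm p (d n) (y n) = \<bar>1 / c n\<bar> * c n"
        unfolding y_def using norm_scale[OF assms(2), of "d n" "1 / c n" "x n"] assms(1) n by (simp add: c_def)
      then show "vec_lp_norm p (d n) (y n) = 1" using cpos[OF n] by simp
    qed
    then have ym: "multilin k d A y \<in> US p k d A" by (auto simp: US_def)
    have xy: "multilin k d A x = multilin k d A (\<lambda>n j. (if n < k then c n else 1) * y n j)"
      unfolding multilin_def
      by (rule sum.cong[OF refl], rule arg_cong[where f="\<lambda>t. _ * t"], rule prod.cong[OF refl])
         (use cpos in \<open>auto simp: y_def less_irrefl_nat dest: cpos\<close>)
    have "(\<Prod>n<k. (if n < k then c n else 1)) = (\<Prod>n<k. c n)" by (rule prod.cong) auto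
    then have xz: "z = (\<Prod>n<k. c n) * multilin k d A y"
      using xy z ml_scale[where t="\<lambda>n. if n < k then c n else 1" and x=y] by simp
    have C0: "(\<Prod>n<k. c n) \<ge> 0" using cpos by (intro prod_nonneg) (auto intro: less_imp_le)
    have "z \<le> (\<Prod>n<k. c n) * Sup (US p k d A)"
      unfolding xz using C0 ym bp by (intro mult_left_mono cSup_upper) auto
    also have "\<dots> \<le> (\<Prod>n<k. real (d n) powr e) * Sup (US p k d A)"
      by (intro mult_right_mono prod_mono) (use cpos cle Sp0 in \<open>auto intro: less_imp_le\<close>)
    also have "(\<Prod>n<k. real (d n) powr e) = real (tensor_dim k d) powr e"
      by (simp add: tensor_dim_def prod_powr_distrib)
    finally show "z \<le> real (tensor_dim k d) powr e * Sup (US p k d A)" .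
  qed
  show ?thesis using I II by (simp add: tn_US e_def)
qed

end
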